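(* Let $F$ be any probability distribution on $[0,\infty)$ with finite mean $\mu=\mathbb{E}[S]>0$. Then for every price $p\in\mathbb{R}_+$, $\mathsf{W}(\mu,F)\ge \mathsf{W}(p,F)$; i.e., posting the mean $p^*=\mu$ is a welfare-maximizing fixed price.
   Context: Symmetric bilateral trade: $B,S$ i.i.d. with distribution $F$ (cumulative distribution function also denoted $F$). Posting price $p$, trade occurs iff $B>p\ge S$. Welfare: $\mathsf{W}(p,F)=\mathbb{E}[S]+\mathbb{E}[(B-S)\mathbf 1_{B>p\ge S}]$. *)

theory Defs
  imports "HOL-Probability.Probability"
begin

text \<open>Welfare of posting price p in symmetric bilateral trade, where the buyer value B
and seller value S are i.i.d. with distribution F. A pair z = (b, s) is drawn from the
product measure F x F; trade happens iff b > p >= s.\<close>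

definition welfare :: "real \<Rightarrow> real measure \<Rightarrow> real" where
  "welfare p F =
     (\<integral>s. s \<partial>F) +
     (\<integral>z. (fst z - snd z) * indicator {z. snd z \<le> p \<and> p < fst z} z \<partial>(F \<Otimes>\<^sub>M F))"

end

theory Submission imports Defs begin

lemma key:
  fixes F :: "real measure" and p :: real
  assumes P: "prob_space F"
    and S[measurable_cong]: "sets F = sets borel"
    and I: "integrable F (\<lambda>x. x)"
  shows "(\<integral>z. (fst z - snd z) * indicator {z. snd z \<le> p \<and> p < fst z} z \<partial>(F \<Otimes>\<^sub>M F))
        = (\<integral>x. ((\<integral>x. x \<partial>F) - x) * indicator {..p} x \<partial>F)"
proof -
  interpret prob_space F by fact
  interpret pair_sigma_finite F F by unfold_locales
  define mu where "mu = (\<integral>x. x \<partial>F)"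
  define Pp where "Pp = (\<integral>x. indicator {..p} x \<partial>F :: real)"
  define A where "A = (\<integral>x. x * indicator {..p} x \<partial>F)"
  have mI: "integrable F (\<lambda>x. indicator B x :: real)" if "B \<in> sets borel" for B
    using that S by (intro integrable_real_indicator) (auto simp: emeasure_eq_measure)
  have i1: "integrable F (\<lambda>x. x * indicator {..p} x)"
    using I by (intro integrable_real_mult_indicator) (auto simp: S)
  have i2: "integrable F (\<lambda>x. x * indicator {p<..} x)"
    using I by (intro integrable_real_mult_indicator) (auto simp: S)
  have ind: "integrable F (\<lambda>x. indicator {..p} x :: real)" "integrable F (\<lambda>x. indicator {p<..} x :: real)"
    by (auto intro!: mI)
  have e1: "(\<integral>x. x * indicator {p<..} x \<partial>F) = mu - A"
  proof -
    have "(\<lambda>x::real. x) = (\<lambda>x. x * indicator {..p} x + x * indicator {p<..} x)"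
      by (auto simp: fun_eq_iff indicator_def)
    then have "mu = A + (\<integral>x. x * indicator {p<..} x \<partial>F)"
      unfolding mu_def A_def using i1 i2 by (metis (no_types) Bochner_Integration.integral_add)
    then show ?thesis by simp
  qed
  have e2: "(\<integral>x. indicator {p<..} x \<partial>F :: real) = 1 - Pp"
  proof -
    have "(\<lambda>x::real. 1::real) = (\<lambda>x. indicator {..p} x + indicator {p<..} x)"
      by (auto simp: fun_eq_iff indicator_def)
    then have "(\<integral>x. 1 \<partial>F) = Pp + (\<integral>x. indicator {p<..} x \<partial>F :: real)"
      unfolding Pp_def using ind by (metis (no_types) Bochner_Integration.integral_add)
    then show ?thesis by (simp add: prob_space)
  qed
  have fst_int: "integrable (F \<Otimes>\<^sub>M F) (\<lambda>z. fst z)"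
  proof -
    have "distr (F \<Otimes>\<^sub>M F) F fst = F" by (rule distr_pair_fst)
    then show ?thesis using I integrable_distr_eq[of fst "F \<Otimes>\<^sub>M F" F "\<lambda>x. x"]
      by (simp add: S)
  qed
  have snd_int: "integrable (F \<Otimes>\<^sub>M F) (\<lambda>z. snd z)"
    using fst_int integrable_product_swap[of "\<lambda>z. fst z"] by (simp add: case_prod_unfold)
  have int: "integrable (F \<Otimes>\<^sub>M F) (\<lambda>z. (fst z - snd z) * indicator {z. snd z \<le> p \<and> p < fst z} z)"
  proof (rule Bochner_Integration.integrable_bound[where f="\<lambda>z. \<bar>fst z\<bar> + \<bar>snd z\<bar>"])
    show "integrable (F \<Otimes>\<^sub>M F) (\<lambda>z. \<bar>fst z\<bar> + \<bar>snd z\<bar>)"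
      using fst_int snd_int by auto
    show "(\<lambda>z. (fst z - snd z) * indicator {z. snd z \<le> p \<and> p < fst z} z) \<in> borel_measurable (F \<Otimes>\<^sub>M F)"
      by measurable
    show "AE x in F \<Otimes>\<^sub>M F. norm ((fst x - snd x) * indicator {z. snd z \<le> p \<and> p < fst z} x) \<le> norm (\<bar>fst x\<bar> + \<bar>snd x\<bar>)"
      by (auto simp: indicator_def)
  qed
  have inner: "(\<integral>s. (b - s) * indicator {z. snd z \<le> p \<and> p < fst z} (b, s) \<partial>F)
      = indicator {p<..} b * (b * Pp - A)" for b
  proof -
    have "(\<lambda>s. (b - s) * indicator {z. snd z \<le> p \<and> p < fst z} (b, s))
        = (\<lambda>s. indicator {p<..} b * (b * indicator {..p} s - s * indicator {..p} s))"
      by (auto simp: fun_eq_iff indicator_def)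
    then show ?thesis using i1 ind unfolding Pp_def A_def by simp
  qed
  have "(\<integral>z. (fst z - snd z) * indicator {z. snd z \<le> p \<and> p < fst z} z \<partial>(F \<Otimes>\<^sub>M F))
      = (\<integral>b. indicator {p<..} b * (b * Pp - A) \<partial>F)"
    using integral_fst'[OF int] inner by simp
  also have "\<dots> = (\<integral>b. (b * indicator {p<..} b) * Pp - indicator {p<..} b * A \<partial>F)"
    by (rule Bochner_Integration.integral_cong) (auto simp: algebra_simps)
  also have "\<dots> = (mu - A) * Pp - (1 - Pp) * A"
    using i2 ind e1 e2 by simp
  also have "\<dots> = mu * Pp - A" by (simp add: algebra_simps)
  also have "\<dots> = (\<integral>x. mu * indicator {..p} x - x * indicator {..p} x \<partial>F)"
    using i1 ind unfolding Pp_def A_def by simp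
  also have "\<dots> = (\<integral>x. (mu - x) * indicator {..p} x \<partial>F)"
    by (rule Bochner_Integration.integral_cong) (auto simp: algebra_simps)
  finally show ?thesis unfolding mu_def .
qed

theorem proposition4:
  fixes F :: "real measure" and p :: real
  assumes "prob_space F"
    and "sets F = sets borel"
    and "AE x in F. 0 \<le> x"
    and "integrable F (\<lambda>x. x)"
    and "(\<integral>x. x \<partial>F) > 0"
    and "0 \<le> p"
  shows "welfare (\<integral>x. x \<partial>F) F \<ge> welfare p F"
proof -
  interpret prob_space F by fact
  define mu where "mu = (\<integral>x. x \<partial>F)"
  have S[measurable_cong]: "sets F = sets borel" by fact
  have ii: "integrable F (\<lambda>x. (mu - x) * indicator B x)" if "B \<in> sets borel" for B
    using assms(4) that by (intro integrable_real_mult_indicator) (auto simp: S)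
  have "(\<integral>x. (mu - x) * indicator {..p} x \<partial>F) \<le> (\<integral>x. (mu - x) * indicator {..mu} x \<partial>F)"
    by (rule integral_mono[OF ii ii]) (auto simp: indicator_def)
  then show ?thesis
    unfolding welfare_def key[OF assms(1,2,4)] mu_def by simp
qed

end
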